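(* Let $D=(E,\mathcal{F})$ be a proper set system, $a,b\in E$ with $a\neq b$, and let $A\subseteq E$ satisfy $|A\cap\{a,b\}|=1$. Then $\omega(D*A)=\omega(D'_{ab}*A)$.
   Context: A set system $D=(E,\mathcal{F})$ is a finite set $E$ together with a collection $\mathcal{F}$ of subsets of $E$ (feasible sets); proper means $\mathcal{F}\neq\emptyset$. $\triangle$ denotes symmetric difference. For $A\subseteq E$, the twist is $D*A=(E,\{A\triangle X: X\in\mathcal{F}\})$. The width $\omega(D)$ of a proper set system is the size of a largest feasible set minus the size of a smallest feasible set. For distinct $a,b\in E$, the result of exchanging handle ends of $a$ and $b$ is $D'_{ab}=(E,\mathcal{F}'_{ab})$ with $\mathcal{F}'_{ab}=\mathcal{F}\triangle\{F\cup\{a,b\}\mid F\in\mathcal{F},\ F\subseteq E\setminus\{a,b\}\}$. *)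

theory Defs
  imports Main
begin

definition set_system :: "'a set \<Rightarrow> 'a set set \<Rightarrow> bool" where
  "set_system E F \<longleftrightarrow> finite E \<and> F \<subseteq> Pow E"

definition proper_set_system :: "'a set \<Rightarrow> 'a set set \<Rightarrow> bool" where
  "proper_set_system E F \<longleftrightarrow> set_system E F \<and> F \<noteq> {}"

definition twist :: "'a set set \<Rightarrow> 'a set \<Rightarrow> 'a set set" where
  "twist F A = (\<lambda>X. (A - X) \<union> (X - A)) ` F"

definition width :: "'a set set \<Rightarrow> nat" where
  "width F = Max (card ` F) - Min (card ` F)"

definition exch_handle :: "'a set \<Rightarrow> 'a set set \<Rightarrow> 'a \<Rightarrow> 'a \<Rightarrow> 'a set set" where
  "exch_handle E F a b = (let G = {X \<union> {a, b} | X. X \<in> F \<and> X \<subseteq> E - {a, b}} in (F - G) \<union> (G - F))"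

end

theory Submission
  imports Defs
begin

lemma card_one_ab:
  assumes "card (A \<inter> {a, b}) = 1" "a \<noteq> b"
  shows "(a \<in> A \<and> b \<notin> A) \<or> (b \<in> A \<and> a \<notin> A)"
proof -
  have "A \<inter> {a,b} \<noteq> {}" using assms by (metis card.empty zero_neq_one)
  moreover have "A \<inter> {a,b} \<noteq> {a,b}" using assms by auto
  ultimately show ?thesis by blast
qed

lemma swap_card:
  assumes "finite A" "finite Y" "a \<noteq> b" "a \<notin> Y" "b \<notin> Y"
    and "(a \<in> A \<and> b \<notin> A) \<or> (b \<in> A \<and> a \<notin> A)"
  shows "card ((A - (Y \<union> {a,b})) \<union> ((Y \<union> {a,b}) - A)) = card ((A - Y) \<union> (Y - A))"
  using assms(6)
proof
  assume h: "a \<in> A \<and> b \<notin> A"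
  let ?S = "(A - Y) \<union> (Y - A)"
  have e: "(A - (Y \<union> {a,b})) \<union> ((Y \<union> {a,b}) - A) = insert b (?S - {a})"
    using h assms by auto
  have f: "finite ?S" using assms by auto
  have "a \<in> ?S" "b \<notin> ?S" using h assms by auto
  then show ?thesis
  proof -
    have "card (insert b (?S - {a})) = Suc (card (?S - {a}))" using f \<open>b \<notin> ?S\<close> by simp
    also have "... = card ?S" by (rule card_Suc_Diff1[OF f \<open>a \<in> ?S\<close>])
    finally show ?thesis unfolding e .
  qed
next
  assume h: "b \<in> A \<and> a \<notin> A"
  let ?S = "(A - Y) \<union> (Y - A)"
  have e: "(A - (Y \<union> {a,b})) \<union> ((Y \<union> {a,b}) - A) = insert a (?S - {b})"
    using h assms by auto
  have f: "finite ?S" using assms by auto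
  have "b \<in> ?S" "a \<notin> ?S" using h assms by auto
  then show ?thesis
  proof -
    have "card (insert a (?S - {b})) = Suc (card (?S - {b}))" using f \<open>a \<notin> ?S\<close> by simp
    also have "... = card ?S" by (rule card_Suc_Diff1[OF f \<open>b \<in> ?S\<close>])
    finally show ?thesis unfolding e .
  qed
qed

theorem proposition3p5:
  fixes E :: "'a set" and F :: "'a set set" and A :: "'a set" and a b :: 'a
  assumes "proper_set_system E F"
    and "a \<in> E" and "b \<in> E" and "a \<noteq> b"
    and "A \<subseteq> E"
    and "card (A \<inter> {a, b}) = 1"
  shows "width (twist F A) = width (twist (exch_handle E F a b) A)"
proof -
  define G where "G = {X \<union> {a, b} | X. X \<in> F \<and> X \<subseteq> E - {a, b}}"
  have FE: "finite E" "F \<subseteq> Pow E" using assms(1) unfolding proper_set_system_def set_system_def by auto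
  have fA: "finite A" using assms(5) FE(1) by (rule finite_subset)
  have ab: "(a \<in> A \<and> b \<notin> A) \<or> (b \<in> A \<and> a \<notin> A)" by (rule card_one_ab[OF assms(6,4)])
  let ?c = "\<lambda>X. card ((A - X) \<union> (X - A))"
  have key: "?c (Y \<union> {a,b}) = ?c Y" if "Y \<in> F" "Y \<subseteq> E - {a,b}" for Y
  proof -
    have "Y \<subseteq> E" using that(2) by blast
    then have "finite Y" using FE(1) by (rule finite_subset)
    moreover have "a \<notin> Y" "b \<notin> Y" using that(2) by auto
    ultimately show ?thesis using swap_card[OF fA _ assms(4) _ _ ab] by simp
  qed
  have eq: "?c ` ((F - G) \<union> (G - F)) = ?c ` F"
  proof
    show "?c ` ((F - G) \<union> (G - F)) \<subseteq> ?c ` F"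
    proof
      fix n assume "n \<in> ?c ` ((F - G) \<union> (G - F))"
      then obtain X where X: "X \<in> (F - G) \<union> (G - F)" "n = ?c X" by blast
      show "n \<in> ?c ` F"
      proof (cases "X \<in> F")
        case True then show ?thesis using X by blast
      next
        case False
        then obtain Y where "X = Y \<union> {a,b}" "Y \<in> F" "Y \<subseteq> E - {a,b}" using X unfolding G_def by blast
        then show ?thesis using X key by (metis (no_types, lifting) image_eqI)
      qed
    qed
  next
    show "?c ` F \<subseteq> ?c ` ((F - G) \<union> (G - F))"
    proof
      fix n assume "n \<in> ?c ` F"
      then obtain X where X: "X \<in> F" "n = ?c X" by blast
      show "n \<in> ?c ` ((F - G) \<union> (G - F))"
      proof (cases "X \<in> G")
        case False then show ?thesis using X by blast
      next
        case True
        then obtain Y where Y: "X = Y \<union> {a,b}" "Y \<in> F" "Y \<subseteq> E - {a,b}" unfolding G_def by blast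
        have "Y \<notin> G" using Y(3) unfolding G_def by auto
        then have "Y \<in> (F - G) \<union> (G - F)" using Y by blast
        then show ?thesis using X Y key by force
      qed
    qed
  qed
  have "card ` twist (exch_handle E F a b) A = card ` twist F A"
    unfolding twist_def exch_handle_def Let_def G_def[symmetric] image_image using eq by simp
  then show ?thesis unfolding width_def by simp
qed

end
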